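(* Consider the system \[ x_{k+1} = x_k - \rho y_k + \hat g(y_k,w_k),\qquad y_{k+1} = (1-\beta)y_k + \hat h(y_{k-1},w_{k-1})\bigl(J(x_k)-J(x_{k-1})\bigr) \] with the setup described in the context. Then for every $k\ge1$, \[ \begin{aligned} \mathbb{E}[\tilde x_{k+1}y_{k+1}]&=-\rho(1-\beta)\mathbb{E}[y_k^2]+\mu\gamma\,\mathbb{E}[\tilde x_{k-1}^2]+\mu\gamma\frac{3\rho^2+\psi}{2}\mathbb{E}[y_{k-1}^2]-3\mu\rho\gamma\,\mathbb{E}[\tilde x_{k-1}y_{k-1}]\\ &\quad+(1-\beta-\mu\rho\gamma)\mathbb{E}[\tilde x_ky_k]+\frac{\mu\gamma\psi\varepsilon}{2}\bigl(\varepsilon+2\mathbb{E}[|y_{k-1}|]\bigr). \end{aligned} \]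
   Context: Setup. Parameters: $\rho>0$, $\beta\in(0,2)$, $\varepsilon>0$, $\omega>0$. The random variables $w_i$, $i\in\mathbb{N}\cup\{0\}$, are i.i.d., each taking the value $-\omega$ or $\omega$ with probability $1/2$. The functions $h,g:\mathbb{R}\to\mathbb{R}$ are odd, satisfy $\mathrm{sign}(g(w))=\mathrm{sign}(h(w))$ for all $w$, and $g(w)=h(w)=0$ if and only if $w=0$. Define $\hat h(y,w):=\frac{h(w)}{|y|+\varepsilon}$ and $\hat g(y,w):=(|y|+\varepsilon)g(w)$. The objective is $J(x)=J^*+\frac{\mu}{2}(x-x^* )^2$ with $\mu>0$, $x^*,J^*\in\mathbb{R}$. The initial data $x_0,y_0$ and the initialization $y_1$ (the $y$-update being applied for $k\ge1$) are deterministic. Notation: $\tilde x_k:=x_k-x^*$, $\psi:=\mathbb{E}[g(w_k)^2]$, $\gamma:=\mathbb{E}[h(w_k)g(w_k)]$. *)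

theory Defs
  imports "HOL-Probability.Probability"
begin

definition hhat :: "(real \<Rightarrow> real) \<Rightarrow> real \<Rightarrow> real \<Rightarrow> real \<Rightarrow> real" where
  "hhat h \<epsilon> y v = h v / (\<bar>y\<bar> + \<epsilon>)"

definition ghat :: "(real \<Rightarrow> real) \<Rightarrow> real \<Rightarrow> real \<Rightarrow> real \<Rightarrow> real" where
  "ghat g \<epsilon> y v = (\<bar>y\<bar> + \<epsilon>) * g v"

end

theory Submission imports Defs begin

definition Fm :: "'a measure \<Rightarrow> (nat \<Rightarrow> 'a \<Rightarrow> real) \<Rightarrow> nat \<Rightarrow> 'a measure" where
  "Fm M w m = sigma (space M) (\<Union>i\<in>{..<m}. {w i -` A \<inter> space M | A. A \<in> sets borel})"

lemma Fm_space[simp]: "space (Fm M w m) = space M"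
  unfolding Fm_def by (rule space_measure_of_conv)

lemma Fm_sets: "sets (Fm M w m) = sigma_sets (space M) (\<Union>i\<in>{..<m}. {w i -` A \<inter> space M | A. A \<in> sets borel})"
  unfolding Fm_def by (rule sets_measure_of) auto

lemma Fm_w: "i < m \<Longrightarrow> w i \<in> borel_measurable (Fm M w m)"
  by (rule measurableI) (auto simp: Fm_sets)

lemma Fm_sub:
  assumes "\<And>i. w i \<in> borel_measurable M"
  shows "subalgebra M (Fm M w m)"
  unfolding subalgebra_def
proof
  show "space (Fm M w m) = space M" by simp
  show "sets (Fm M w m) \<subseteq> sets M" unfolding Fm_sets
    by (rule sets.sigma_sets_subset) (use assms in auto)
qed

lemma (in prob_space) indep_Fm:
  assumes indep: "indep_vars (\<lambda>_. borel) w UNIV"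
  and Z: "Z \<in> borel_measurable (Fm M w m)"
  shows "indep_var borel Z borel (w m)"
proof -
  let ?E = "\<lambda>i. {w i -` A \<inter> space M | A. A \<in> sets borel}"
  let ?I = "\<lambda>j. case_bool {..<m} {m} j"
  have wm: "\<And>i. w i \<in> borel_measurable M" using indep by (simp add: indep_vars_def2)
  have ind: "indep_sets ?E UNIV" using indep by (simp add: indep_vars_def2)
  have "indep_sets (\<lambda>j. sigma_sets (space M) (\<Union>i\<in>?I j. ?E i)) UNIV"
  proof (rule indep_sets_collect_sigma)
    show "indep_sets ?E (\<Union>j\<in>UNIV. ?I j)"
      by (rule indep_sets_mono_index[OF _ ind]) auto
    fix i j show "Int_stable (?E i)"
        apply (auto simp: Int_stable_def)
        apply (rule_tac x="A \<inter> Aa" in exI)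
        apply auto
        done
  next
    show "disjoint_family_on ?I UNIV"
      by (auto simp: disjoint_family_on_def split: bool.split)
  qed
  then have "indep_sets (\<lambda>i. {case_bool Z (w m) i -` A \<inter> space M | A. A \<in> sets (case_bool borel borel i)}) UNIV"
  proof (rule indep_sets_mono_sets)
    fix j :: bool
    show "{case_bool Z (w m) j -` A \<inter> space M | A. A \<in> sets (case_bool borel borel j)} \<subseteq> sigma_sets (space M) (\<Union>i\<in>?I j. ?E i)"
    proof (cases j)
      case True
      then show ?thesis using measurable_sets[OF Z] by (auto simp: Fm_sets)
    next
      case False
      then show ?thesis by auto
    qed
  qed
  moreover have "Z \<in> borel_measurable M"
    by (rule measurable_from_subalg[OF Fm_sub[OF wm] Z])
  ultimately show ?thesis
    unfolding indep_var_def indep_vars_def2 using wm by (auto split: bool.split)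
qed

lemma alg:
  fixes a b z ea eb G H r be mu c cz :: real
  assumes ea: "ea = 1 \<or> ea = -1" and c: "c \<noteq> 0"
  shows "((a - r*b + c*G*ea) - r*z + cz*G*eb) * ((1-be)*z + H*ea/c*(mu/2*((a - r*b + c*G*ea)^2-a^2)))
   = (- r*(1-be)*z^2 + mu*(H*G)*a^2 + mu*(H*G)*3*r^2/2*b^2 + mu*(H*G)*G^2/2*c^2 - 3*mu*r*(H*G)*a*b + (1-be-mu*r*(H*G))*(z*(a - r*b)))
     + ((1-be)*z*c*G + mu/2*(H*(a-r*b)*((a-r*b)^2-a^2)/c+3*(a-r*b)*c*H*G^2) - r*z*mu/2*(H*(-2*a*r*b+r^2*b^2)/c+c*H*G^2)) * ea
     + (cz*G*((1-be)*z + H*ea/c*(mu/2*((a - r*b + c*G*ea)^2-a^2)))) * eb"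
  using ea
proof
  assume "ea = 1" then show ?thesis using c by (simp add: field_simps power2_eq_square power3_eq_cube)
next
  assume "ea = -1" then show ?thesis using c by (simp add: field_simps power2_eq_square power3_eq_cube)
qed

definition bdd_on :: "'a set \<Rightarrow> ('a \<Rightarrow> real) \<Rightarrow> bool" where
  "bdd_on S f = (\<exists>B. \<forall>s\<in>S. \<bar>f s\<bar> \<le> B)"

lemma bdd_const[simp]: "bdd_on S (\<lambda>s. c)"
  unfolding bdd_on_def by auto

lemma bdd_add: "bdd_on S f \<Longrightarrow> bdd_on S g \<Longrightarrow> bdd_on S (\<lambda>s. f s + g s)"
  unfolding bdd_on_def
proof (elim exE)
  fix B C assume "\<forall>s\<in>S. \<bar>f s\<bar> \<le> B" "\<forall>s\<in>S. \<bar>g s\<bar> \<le> C"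
  then show "\<exists>B. \<forall>s\<in>S. \<bar>f s + g s\<bar> \<le> B"
    by (intro exI[of _ "B + C"]) (auto intro: order.trans[OF abs_triangle_ineq] add_mono)
qed

lemma bdd_minus: "bdd_on S f \<Longrightarrow> bdd_on S g \<Longrightarrow> bdd_on S (\<lambda>s. f s - g s)"
  unfolding bdd_on_def
proof (elim exE)
  fix B C assume "\<forall>s\<in>S. \<bar>f s\<bar> \<le> B" "\<forall>s\<in>S. \<bar>g s\<bar> \<le> C"
  then show "\<exists>B. \<forall>s\<in>S. \<bar>f s - g s\<bar> \<le> B"
    by (intro exI[of _ "B + C"]) (auto intro: order.trans[OF abs_triangle_ineq4] add_mono)
qed

lemma bdd_mult: "bdd_on S f \<Longrightarrow> bdd_on S g \<Longrightarrow> bdd_on S (\<lambda>s. f s * g s)"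
  unfolding bdd_on_def
proof (elim exE)
  fix B C assume B: "\<forall>s\<in>S. \<bar>f s\<bar> \<le> B" and C: "\<forall>s\<in>S. \<bar>g s\<bar> \<le> C"
  show "\<exists>B. \<forall>s\<in>S. \<bar>f s * g s\<bar> \<le> B"
  proof (intro exI ballI)
    fix s assume s: "s \<in> S"
    have "\<bar>f s * g s\<bar> = \<bar>f s\<bar> * \<bar>g s\<bar>" by (simp add: abs_mult)
    also have "\<dots> \<le> B * C" using B C s by (intro mult_mono) auto
    finally show "\<bar>f s * g s\<bar> \<le> B * C" .
  qed
qed

lemma bdd_abs: "bdd_on S f \<Longrightarrow> bdd_on S (\<lambda>s. \<bar>f s\<bar>)"
  unfolding bdd_on_def by auto

lemma bdd_pow2: "bdd_on S f \<Longrightarrow> bdd_on S (\<lambda>s. (f s)^2)"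
  unfolding power2_eq_square by (rule bdd_mult)

lemma bdd_div: "bdd_on S f \<Longrightarrow> (\<epsilon>::real) > 0 \<Longrightarrow> bdd_on S (\<lambda>s. f s / (\<bar>y s\<bar> + \<epsilon>))"
  unfolding bdd_on_def
proof (elim exE)
  fix B assume B: "\<forall>s\<in>S. \<bar>f s\<bar> \<le> B" and e: "\<epsilon> > 0"
  show "\<exists>B. \<forall>s\<in>S. \<bar>f s / (\<bar>y s\<bar> + \<epsilon>)\<bar> \<le> B"
  proof (intro exI ballI)
    fix s assume s: "s \<in> S"
    have "\<bar>f s / (\<bar>y s\<bar> + \<epsilon>)\<bar> = \<bar>f s\<bar> / (\<bar>y s\<bar> + \<epsilon>)" using e by simp
    also have "\<dots> \<le> \<bar>f s\<bar> / \<epsilon>" using e by (intro divide_left_mono) auto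
    also have "\<dots> \<le> B / \<epsilon>" using B s e by (intro divide_right_mono) auto
    finally show "\<bar>f s / (\<bar>y s\<bar> + \<epsilon>)\<bar> \<le> B / \<epsilon>" .
  qed
qed

lemma bdd_cong: "bdd_on S f \<Longrightarrow> (\<And>s. s \<in> S \<Longrightarrow> g s = f s) \<Longrightarrow> bdd_on S g"
  unfolding bdd_on_def by auto

lemma bdd_int:
  assumes "prob_space M" "bdd_on (space M) f" "f \<in> borel_measurable M"
  shows "integrable M f"
proof -
  interpret prob_space M by fact
  from assms(2) obtain B where "\<forall>s\<in>space M. \<bar>f s\<bar> \<le> B" unfolding bdd_on_def by auto
  then show ?thesis
    by (intro integrable_const_bound[where B=B] AE_I2 assms(3)) auto
qed

lemma (in prob_space) indep_zero:
  assumes indep: "indep_vars (\<lambda>_. borel) w UNIV"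
    and w_vals: "\<And>i s. s \<in> space M \<Longrightarrow> w i s = - \<omega> \<or> w i s = \<omega>"
    and w_prob: "measure M {s \<in> space M. w m s = \<omega>} = 1/2"
    and om: "\<omega> > 0"
    and Z: "Z \<in> borel_measurable (Fm M w m)" and Zb: "bdd_on (space M) Z"
  shows "integral\<^sup>L M (\<lambda>s. Z s * (w m s / \<omega>)) = 0"
proof -
  have wm: "\<And>i. w i \<in> borel_measurable M" using indep by (simp add: indep_vars_def2)
  have ZM: "Z \<in> borel_measurable M"
    by (rule measurable_from_subalg[OF Fm_sub[OF wm] Z])
  define A where "A = {s \<in> space M. w m s = \<omega>}"
  define B where "B = {s \<in> space M. w m s = - \<omega>}"
  have A: "A \<in> events" unfolding A_def using wm[of m] by measurable
  have BA: "B = space M - A" unfolding A_def B_def using w_vals om by force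
  have pB: "prob B = 1/2" unfolding BA using prob_compl[OF A] w_prob A_def by simp
  have B: "B \<in> events" unfolding BA using A by auto
  have "integral\<^sup>L M (w m) = integral\<^sup>L M (\<lambda>s. \<omega> * indicator A s - \<omega> * indicator B s)"
    using w_vals om by (intro Bochner_Integration.integral_cong) (auto simp: A_def B_def indicator_def)
  also have "\<dots> = \<omega> * prob A - \<omega> * prob B"
    using A B by (subst Bochner_Integration.integral_diff) (auto intro!: integrable_real_indicator simp: emeasure_eq_measure)
  also have "\<dots> = 0"
    using w_prob pB by (simp add: A_def)
  finally have Ew: "integral\<^sup>L M (w m) = 0" .
  have wb: "bdd_on (space M) (w m)" unfolding bdd_on_def
    proof (intro exI[of _ \<omega>] ballI)
    fix s assume "s \<in> space M"
    then have "w m s = - \<omega> \<or> w m s = \<omega>" by (rule w_vals)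
    then show "\<bar>w m s\<bar> \<le> \<omega>" using om by auto
  qed
  have "integral\<^sup>L M (\<lambda>s. Z s * (w m s / \<omega>)) = integral\<^sup>L M (\<lambda>s. Z s * w m s) / \<omega>"
    by simp
  also have "integral\<^sup>L M (\<lambda>s. Z s * w m s) = integral\<^sup>L M Z * integral\<^sup>L M (w m)"
    by (rule indep_var_lebesgue_integral[OF indep_Fm[OF indep Z]])
       (auto intro: bdd_int[OF prob_space_axioms] Zb ZM wb wm)
  finally show ?thesis using Ew by simp
qed

lemma lin7:
  assumes "prob_space M" "integrable M f1" "integrable M f2" "integrable M f3" "integrable M f4"
    "integrable M f5" "integrable M f6"
  shows "integral\<^sup>L M (\<lambda>s. c1 * f1 s + c2 * f2 s + c3 * f3 s + c4 * f4 s + c5 * f5 s + c6 * f6 s + (c7::real))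
    = c1 * integral\<^sup>L M f1 + c2 * integral\<^sup>L M f2 + c3 * integral\<^sup>L M f3 + c4 * integral\<^sup>L M f4
      + c5 * integral\<^sup>L M f5 + c6 * integral\<^sup>L M f6 + c7"
proof -
  interpret prob_space M by fact
  show ?thesis using assms(2-) by (simp add: prob_space)
qed

lemma bdd_divc: "bdd_on S f \<Longrightarrow> bdd_on S (\<lambda>s. f s / (c::real))"
  by (rule bdd_cong[OF bdd_mult[OF _ bdd_const[of S "1/c"]]]) auto
theorem lemma8:
  fixes M :: "'a measure"
    and w :: "nat \<Rightarrow> 'a \<Rightarrow> real"
    and h g J :: "real \<Rightarrow> real"
    and x y :: "nat \<Rightarrow> 'a \<Rightarrow> real"
    and \<rho> \<beta> \<epsilon> \<omega> \<mu> xstar Jstar x0 y0 y1 \<psi> \<gamma> :: real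
    and k :: nat
  assumes M: "prob_space M"
    and indep: "prob_space.indep_vars M (\<lambda>_. borel) w UNIV"
    and w_vals: "\<And>i s. s \<in> space M \<Longrightarrow> w i s = - \<omega> \<or> w i s = \<omega>"
    and w_prob: "\<And>i. measure M {s \<in> space M. w i s = \<omega>} = 1/2"
    and \<rho>: "\<rho> > 0" and \<beta>: "0 < \<beta>" "\<beta> < 2" and \<epsilon>: "\<epsilon> > 0" and \<omega>: "\<omega> > 0"
    and h_odd: "\<And>v. h (- v) = - h v"
    and g_odd: "\<And>v. g (- v) = - g v"
    and sgn_hg: "\<And>v. sgn (g v) = sgn (h v)"
    and h_zero: "\<And>v. h v = 0 \<longleftrightarrow> v = 0"
    and g_zero: "\<And>v. g v = 0 \<longleftrightarrow> v = 0"
    and \<mu>: "\<mu> > 0"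
    and J_def: "\<And>z. J z = Jstar + \<mu> / 2 * (z - xstar)\<^sup>2"
    and x_0: "\<And>s. x 0 s = x0"
    and y_0: "\<And>s. y 0 s = y0"
    and y_1: "\<And>s. y 1 s = y1"
    and x_step: "\<And>n s. s \<in> space M \<Longrightarrow>
        x (Suc n) s = x n s - \<rho> * y n s + ghat g \<epsilon> (y n s) (w n s)"
    and y_step: "\<And>n s. n \<ge> 1 \<Longrightarrow> s \<in> space M \<Longrightarrow>
        y (Suc n) s = (1 - \<beta>) * y n s
          + hhat h \<epsilon> (y (n - 1) s) (w (n - 1) s) * (J (x n s) - J (x (n - 1) s))"
    and \<psi>_def: "\<And>i. \<psi> = integral\<^sup>L M (\<lambda>s. (g (w i s))\<^sup>2)"
    and \<gamma>_def: "\<And>i. \<gamma> = integral\<^sup>L M (\<lambda>s. h (w i s) * g (w i s))"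
    and k: "k \<ge> 1"
  shows "integral\<^sup>L M (\<lambda>s. (x (Suc k) s - xstar) * y (Suc k) s)
    = - \<rho> * (1 - \<beta>) * integral\<^sup>L M (\<lambda>s. (y k s)\<^sup>2)
      + \<mu> * \<gamma> * integral\<^sup>L M (\<lambda>s. (x (k - 1) s - xstar)\<^sup>2)
      + \<mu> * \<gamma> * ((3 * \<rho>\<^sup>2 + \<psi>) / 2) * integral\<^sup>L M (\<lambda>s. (y (k - 1) s)\<^sup>2)
      - 3 * \<mu> * \<rho> * \<gamma> * integral\<^sup>L M (\<lambda>s. (x (k - 1) s - xstar) * y (k - 1) s)
      + (1 - \<beta> - \<mu> * \<rho> * \<gamma>) * integral\<^sup>L M (\<lambda>s. (x k s - xstar) * y k s)
      + \<mu> * \<gamma> * \<psi> * \<epsilon> / 2 * (\<epsilon> + 2 * integral\<^sup>L M (\<lambda>s. \<bar>y (k - 1) s\<bar>))"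
proof -
  interpret P: prob_space M by (rule M)
  have wm: "\<And>i. w i \<in> borel_measurable M" using indep by (simp add: P.indep_vars_def2)
  have wv: "\<And>i s. s \<in> space M \<Longrightarrow> w i s = - \<omega> \<or> w i s = \<omega>" by (rule w_vals)
  have gw: "g (w i s) = g \<omega> * (w i s / \<omega>)" if "s \<in> space M" for i s
    using wv[OF that, of i] \<omega> g_odd[of \<omega>] by auto
  have hw: "h (w i s) = h \<omega> * (w i s / \<omega>)" if "s \<in> space M" for i s
    using wv[OF that, of i] \<omega> h_odd[of \<omega>] by auto
  have e2: "(w i s / \<omega>)^2 = 1" if "s \<in> space M" for i s
    using wv[OF that, of i] \<omega> by (auto simp: power2_eq_square)
  have xs: "x (Suc n) s = x n s - \<rho> * y n s + (\<bar>y n s\<bar> + \<epsilon>) * (g \<omega> * (w n s / \<omega>))"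
    if "s \<in> space M" for n s
    using x_step[OF that, of n] gw[OF that, of n] by (simp add: ghat_def)
  have ys: "y (Suc n) s = (1 - \<beta>) * y n s + h \<omega> * (w (n - 1) s / \<omega>) / (\<bar>y (n - 1) s\<bar> + \<epsilon>)
      * (\<mu> / 2 * ((x n s - xstar)^2 - (x (n - 1) s - xstar)^2))"
    if "1 \<le> n" "s \<in> space M" for n s
  proof -
    have hJ: "J (x n s) - J (x (n - 1) s) = \<mu> / 2 * ((x n s - xstar)^2 - (x (n - 1) s - xstar)^2)"
      unfolding J_def by (simp add: algebra_simps)
    show ?thesis using y_step[OF that]
      by (simp only: hhat_def hw[OF that(2)] hJ)
  qed
  have meas: "(n \<le> N \<longrightarrow> x n \<in> borel_measurable (Fm M w N)) \<and> (n \<le> Suc N \<longrightarrow> y n \<in> borel_measurable (Fm M w N))" for n N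
  proof (induction n rule: nat_less_induct)
    case (1 n)
    show ?case
    proof (cases n)
      case 0
      have "x 0 = (\<lambda>s. x0)" "y 0 = (\<lambda>s. y0)" using x_0 y_0 by auto
      then show ?thesis using 0 by simp
    next
      case (Suc m)
      have IHm: "(m \<le> N \<longrightarrow> x m \<in> borel_measurable (Fm M w N)) \<and> (m \<le> Suc N \<longrightarrow> y m \<in> borel_measurable (Fm M w N))"
        using 1 Suc by auto
      have X: "x (Suc m) \<in> borel_measurable (Fm M w N)" if "Suc m \<le> N"
      proof -
        have [measurable]: "x m \<in> borel_measurable (Fm M w N)" "y m \<in> borel_measurable (Fm M w N)"
          "w m \<in> borel_measurable (Fm M w N)"
          using IHm that Fm_w[of m N w M] by auto
        have "(\<lambda>s. x m s - \<rho> * y m s + (\<bar>y m s\<bar> + \<epsilon>) * (g \<omega> * (w m s / \<omega>))) \<in> borel_measurable (Fm M w N)"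
          using that by measurable
        moreover have "x (Suc m) \<in> borel_measurable (Fm M w N) \<longleftrightarrow> (\<lambda>s. x m s - \<rho> * y m s + (\<bar>y m s\<bar> + \<epsilon>) * (g \<omega> * (w m s / \<omega>))) \<in> borel_measurable (Fm M w N)"
          by (rule measurable_cong) (simp add: xs)
        ultimately show ?thesis by simp
      qed
      have Y: "y (Suc m) \<in> borel_measurable (Fm M w N)" if "Suc m \<le> Suc N"
      proof (cases m)
        case 0
        have "y (Suc m) = (\<lambda>s. y1)" using y_1 0 by auto
        then show ?thesis by simp
      next
        case (Suc l)
        have IHl: "(l \<le> N \<longrightarrow> x l \<in> borel_measurable (Fm M w N)) \<and> (l \<le> Suc N \<longrightarrow> y l \<in> borel_measurable (Fm M w N))"
          using 1 Suc \<open>n = Suc m\<close> by auto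
        have [measurable]: "x m \<in> borel_measurable (Fm M w N)" "y m \<in> borel_measurable (Fm M w N)"
          "w l \<in> borel_measurable (Fm M w N)" "x l \<in> borel_measurable (Fm M w N)" "y l \<in> borel_measurable (Fm M w N)"
          using IHm IHl that Suc Fm_w[of l N w M] by auto
        have "(\<lambda>s. (1 - \<beta>) * y m s + h \<omega> * (w l s / \<omega>) / (\<bar>y l s\<bar> + \<epsilon>)
            * (\<mu> / 2 * ((x m s - xstar)^2 - (x l s - xstar)^2))) \<in> borel_measurable (Fm M w N)"
          using that Suc by measurable
        moreover have "y (Suc m) \<in> borel_measurable (Fm M w N) \<longleftrightarrow> (\<lambda>s. (1 - \<beta>) * y m s + h \<omega> * (w l s / \<omega>) / (\<bar>y l s\<bar> + \<epsilon>)
            * (\<mu> / 2 * ((x m s - xstar)^2 - (x l s - xstar)^2))) \<in> borel_measurable (Fm M w N)"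
          by (rule measurable_cong) (simp add: ys Suc)
        ultimately show ?thesis by simp
      qed
      show ?thesis using X Y Suc by auto
    qed
  qed
  have measM [measurable]: "x n \<in> borel_measurable M" "y n \<in> borel_measurable M" for n
    using meas[of n n] by (auto intro: measurable_from_subalg[OF Fm_sub[OF wm]])
  note wm[measurable]
  have bw: "bdd_on (space M) (\<lambda>s. w i s / \<omega>)" for i
    unfolding bdd_on_def
  proof (intro exI[of _ 1] ballI)
    fix s assume "s \<in> space M"
    then have "w i s = - \<omega> \<or> w i s = \<omega>" by (rule wv)
    then show "\<bar>w i s / \<omega>\<bar> \<le> 1" using \<omega> by auto
  qed
  have bnd: "\<forall>m\<le>n. bdd_on (space M) (x m) \<and> bdd_on (space M) (y m)" for n
  proof (induction n)
    case 0
    have "bdd_on (space M) (x 0)" by (rule bdd_cong[OF bdd_const[of _ x0]]) (simp add: x_0)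
    moreover have "bdd_on (space M) (y 0)" by (rule bdd_cong[OF bdd_const[of _ y0]]) (simp add: y_0)
    ultimately show ?case by simp
  next
    case (Suc n)
    note IH = Suc.IH
    have bx: "bdd_on (space M) (x n)" "bdd_on (space M) (y n)" using Suc by auto
    have "bdd_on (space M) (x (Suc n))"
      by (rule bdd_cong[OF _ xs]) (intro bdd_add bdd_minus bdd_mult bdd_abs bdd_const bx bw)
    moreover have "bdd_on (space M) (y (Suc n))"
    proof (cases n)
      case 0
      show ?thesis by (rule bdd_cong[OF bdd_const[of _ y1]]) (use y_1 0 in \<open>simp add: One_nat_def\<close>)
    next
      case (Suc l)
      have bl: "bdd_on (space M) (x l)" "bdd_on (space M) (y l)" using IH Suc by auto
      show ?thesis
        by (rule bdd_cong[OF _ ys]) (use Suc in \<open>(intro bdd_add bdd_minus bdd_mult bdd_abs bdd_const bdd_pow2 bdd_div bx bw bl \<epsilon>)+, auto simp: bl\<close>)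
    qed
    ultimately show ?case using Suc by (auto simp: le_Suc_eq)
  qed
  have bxn: "bdd_on (space M) (x n)" and byn: "bdd_on (space M) (y n)" for n using bnd[of n] by auto
  obtain j where kj: "k = Suc j" using k by (cases k) auto
  define G where "G = g \<omega>"
  define Hh where "Hh = h \<omega>"
  define Xk where "Xk s = (x j s - xstar) - \<rho> * y j s + (\<bar>y j s\<bar> + \<epsilon>) * G * (w j s / \<omega>)" for s
  define Yk1 where "Yk1 s = (1 - \<beta>) * y k s + Hh * (w j s / \<omega>) / (\<bar>y j s\<bar> + \<epsilon>) * (\<mu> / 2 * ((Xk s)^2 - (x j s - xstar)^2))" for s
  define R0 where "R0 s = (- \<rho>*(1-\<beta>)*(y k s)^2 + \<mu>*(Hh*G)*(x j s - xstar)^2 + \<mu>*(Hh*G)*3*\<rho>^2/2*(y j s)^2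
     + \<mu>*(Hh*G)*G^2/2*(\<bar>y j s\<bar> + \<epsilon>)^2 - 3*\<mu>*\<rho>*(Hh*G)*(x j s - xstar)*(y j s)
     + (1-\<beta>-\<mu>*\<rho>*(Hh*G))*(y k s*((x j s - xstar) - \<rho>*y j s)))" for s
  define R1 where "R1 s = (1-\<beta>)*y k s*(\<bar>y j s\<bar> + \<epsilon>)*G
     + \<mu>/2*(Hh*((x j s - xstar)-\<rho>*y j s)*(((x j s - xstar)-\<rho>*y j s)^2-(x j s - xstar)^2)/(\<bar>y j s\<bar> + \<epsilon>)
         +3*((x j s - xstar)-\<rho>*y j s)*(\<bar>y j s\<bar> + \<epsilon>)*Hh*G^2)
     - \<rho>*y k s*\<mu>/2*(Hh*(-2*(x j s - xstar)*\<rho>*y j s+\<rho>^2*(y j s)^2)/(\<bar>y j s\<bar> + \<epsilon>)+(\<bar>y j s\<bar> + \<epsilon>)*Hh*G^2)" for s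
  define Q where "Q s = (\<bar>y k s\<bar> + \<epsilon>) * G * Yk1 s" for s
  have pX: "x k s - xstar = Xk s" if "s \<in> space M" for s
    using xs[OF that, of j] unfolding kj Xk_def G_def by (simp add: algebra_simps add_divide_distrib)
  have pY: "y (Suc k) s = Yk1 s" if "s \<in> space M" for s
    using ys[OF _ that, of k] k pX[OF that] unfolding Yk1_def Hh_def by (simp add: kj)
  have pX1: "x (Suc k) s - xstar = Xk s - \<rho> * y k s + (\<bar>y k s\<bar> + \<epsilon>) * G * (w k s / \<omega>)" if "s \<in> space M" for s
    using xs[OF that, of k] pX[OF that] unfolding G_def by (simp add: algebra_simps add_divide_distrib)
  have e1: "w j s / \<omega> = 1 \<or> w j s / \<omega> = -1" if "s \<in> space M" for s
    using wv[OF that, of j] \<omega> by auto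
  have prod: "(x (Suc k) s - xstar) * y (Suc k) s = R0 s + R1 s * (w j s / \<omega>) + Q s * (w k s / \<omega>)"
    if "s \<in> space M" for s
  proof -
    have c: "\<bar>y j s\<bar> + \<epsilon> \<noteq> 0" using \<epsilon> by auto
    show ?thesis
      unfolding pX1[OF that] pY[OF that] Xk_def Yk1_def R0_def R1_def Q_def
      using alg[where a="x j s - xstar" and r=\<rho> and b="y j s" and G=G and z="y k s"
          and cz="\<bar>y k s\<bar> + \<epsilon>" and eb="w k s / \<omega>" and be=\<beta> and H=Hh and mu=\<mu>, OF e1[OF that] c] .
  qed
  have mj [measurable]: "x j \<in> borel_measurable (Fm M w j)" "y j \<in> borel_measurable (Fm M w j)"
      "y k \<in> borel_measurable (Fm M w j)"
    using meas[of j j] meas[of k j] kj by auto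
  have mk [measurable]: "x j \<in> borel_measurable (Fm M w k)" "y j \<in> borel_measurable (Fm M w k)"
      "y k \<in> borel_measurable (Fm M w k)" "w j \<in> borel_measurable (Fm M w k)"
    using meas[of j k] meas[of k k] kj Fm_w[of j k w M] by auto
  have subj: "subalgebra M (Fm M w j)" and subk: "subalgebra M (Fm M w k)" using Fm_sub[OF wm] by auto
  have R1m: "R1 \<in> borel_measurable (Fm M w j)" unfolding R1_def by measurable
  have Qm: "Q \<in> borel_measurable (Fm M w k)" unfolding Q_def Yk1_def Xk_def by measurable
  have R0m: "R0 \<in> borel_measurable M" unfolding R0_def by measurable
  have R1M [measurable]: "R1 \<in> borel_measurable M" by (rule measurable_from_subalg[OF subj R1m])
  have QM [measurable]: "Q \<in> borel_measurable M" by (rule measurable_from_subalg[OF subk Qm])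
  note bI = bdd_divc bdd_add bdd_minus bdd_mult bdd_abs bdd_const bdd_pow2 bdd_div bxn byn bw \<epsilon>
  have R0b: "bdd_on (space M) R0" unfolding R0_def by (intro bI)+
  have R1b: "bdd_on (space M) R1" unfolding R1_def by (intro bI)+
  have Qb: "bdd_on (space M) Q" unfolding Q_def Yk1_def Xk_def by (intro bI)+
  have int: "integrable M f" if "bdd_on (space M) f" "f \<in> borel_measurable M" for f
    by (rule bdd_int[OF M that])
  have "integral\<^sup>L M (\<lambda>s. (x (Suc k) s - xstar) * y (Suc k) s)
      = integral\<^sup>L M (\<lambda>s. R0 s + R1 s * (w j s / \<omega>) + Q s * (w k s / \<omega>))"
    by (intro Bochner_Integration.integral_cong) (auto simp: prod)
  also have "\<dots> = integral\<^sup>L M R0 + integral\<^sup>L M (\<lambda>s. R1 s * (w j s / \<omega>)) + integral\<^sup>L M (\<lambda>s. Q s * (w k s / \<omega>))"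
  proof -
    have i0: "integrable M R0" by (rule int[OF R0b R0m])
    have i1: "integrable M (\<lambda>s. R1 s * (w j s / \<omega>))" by (rule int[OF bdd_mult[OF R1b bw]]) measurable
    have i2: "integrable M (\<lambda>s. Q s * (w k s / \<omega>))" by (rule int[OF bdd_mult[OF Qb bw]]) measurable
    show ?thesis
      using Bochner_Integration.integral_add[OF Bochner_Integration.integrable_add[OF i0 i1] i2]
        Bochner_Integration.integral_add[OF i0 i1] by simp
  qed
  also have "integral\<^sup>L M (\<lambda>s. R1 s * (w j s / \<omega>)) = 0"
    by (rule P.indep_zero[OF indep wv w_prob \<omega> R1m R1b])
  also have "integral\<^sup>L M (\<lambda>s. Q s * (w k s / \<omega>)) = 0"
    by (rule P.indep_zero[OF indep wv w_prob \<omega> Qm Qb])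
  finally have step1: "integral\<^sup>L M (\<lambda>s. (x (Suc k) s - xstar) * y (Suc k) s) = integral\<^sup>L M R0" by simp
  have \<gamma>v: "\<gamma> = Hh * G"
  proof -
    have "\<gamma> = integral\<^sup>L M (\<lambda>s. Hh * G)" unfolding \<gamma>_def[of j]
    proof (intro Bochner_Integration.integral_cong refl)
      fix s assume s: "s \<in> space M"
      have "h (w j s) * g (w j s) = Hh * G * (w j s / \<omega>)^2"
        unfolding hw[OF s] gw[OF s] Hh_def G_def by (simp add: power2_eq_square)
      then show "h (w j s) * g (w j s) = Hh * G" using e2[OF s] by simp
    qed
    then show ?thesis by (simp add: P.prob_space)
  qed
  have \<psi>v: "\<psi> = G^2"
  proof -
    have "\<psi> = integral\<^sup>L M (\<lambda>s. G^2)" unfolding \<psi>_def[of j]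
    proof (intro Bochner_Integration.integral_cong refl)
      fix s assume s: "s \<in> space M"
      have "(g (w j s))^2 = G^2 * (w j s / \<omega>)^2"
        unfolding gw[OF s] G_def by (simp add: power2_eq_square)
      then show "(g (w j s))^2 = G^2" using e2[OF s] by simp
    qed
    then show ?thesis by (simp add: P.prob_space)
  qed
  define f1 where "f1 s = (y k s)^2" for s
  define f2 where "f2 s = (x j s - xstar)^2" for s
  define f3 where "f3 s = (y j s)^2" for s
  define f4 where "f4 s = (x j s - xstar) * y j s" for s
  define f5 where "f5 s = y k s * ((x j s - xstar) - \<rho> * y j s)" for s
  define f6 where "f6 s = \<bar>y j s\<bar>" for s
  have R0eq: "R0 s = (- \<rho> * (1 - \<beta>)) * f1 s + (\<mu> * \<gamma>) * f2 s + (\<mu> * \<gamma> * ((3 * \<rho>^2 + \<psi>) / 2)) * f3 s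
      + (- 3 * \<mu> * \<rho> * \<gamma>) * f4 s + (1 - \<beta> - \<mu> * \<rho> * \<gamma>) * f5 s + (\<mu> * \<gamma> * \<psi> * \<epsilon>) * f6 s
      + \<mu> * \<gamma> * \<psi> * \<epsilon> / 2 * \<epsilon>" for s
  proof -
    have sq: "(\<bar>y j s\<bar> + \<epsilon>)^2 = (y j s)^2 + 2 * \<epsilon> * \<bar>y j s\<bar> + \<epsilon>^2"
      by (simp add: power2_sum)
    show ?thesis unfolding R0_def sq \<gamma>v \<psi>v f1_def f2_def f3_def f4_def f5_def f6_def
      by (simp add: algebra_simps power2_eq_square add_divide_distrib)
  qed
  have if1: "integrable M f1" unfolding f1_def by (rule int) ((intro bI)+, measurable)
  have if2: "integrable M f2" unfolding f2_def by (rule int) ((intro bI)+, measurable)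
  have if3: "integrable M f3" unfolding f3_def by (rule int) ((intro bI)+, measurable)
  have if4: "integrable M f4" unfolding f4_def by (rule int) ((intro bI)+, measurable)
  have if5: "integrable M f5" unfolding f5_def by (rule int) ((intro bI)+, measurable)
  have if6: "integrable M f6" unfolding f6_def by (rule int) ((intro bI)+, measurable)
  have IR0: "integral\<^sup>L M R0 = (- \<rho> * (1 - \<beta>)) * integral\<^sup>L M f1 + (\<mu> * \<gamma>) * integral\<^sup>L M f2
      + (\<mu> * \<gamma> * ((3 * \<rho>^2 + \<psi>) / 2)) * integral\<^sup>L M f3
      + (- 3 * \<mu> * \<rho> * \<gamma>) * integral\<^sup>L M f4 + (1 - \<beta> - \<mu> * \<rho> * \<gamma>) * integral\<^sup>L M f5
      + (\<mu> * \<gamma> * \<psi> * \<epsilon>) * integral\<^sup>L M f6 + \<mu> * \<gamma> * \<psi> * \<epsilon> / 2 * \<epsilon>"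
    unfolding R0eq by (rule lin7[OF M if1 if2 if3 if4 if5 if6])
  have I5: "integral\<^sup>L M (\<lambda>s. (x k s - xstar) * y k s) = integral\<^sup>L M f5"
  proof -
    have "integral\<^sup>L M (\<lambda>s. (x k s - xstar) * y k s)
        = integral\<^sup>L M (\<lambda>s. f5 s + (y k s * (\<bar>y j s\<bar> + \<epsilon>) * G) * (w j s / \<omega>))"
    proof (intro Bochner_Integration.integral_cong refl)
      fix s assume s: "s \<in> space M"
      show "(x k s - xstar) * y k s = f5 s + (y k s * (\<bar>y j s\<bar> + \<epsilon>) * G) * (w j s / \<omega>)"
        unfolding pX[OF s] Xk_def f5_def by (simp add: algebra_simps)
    qed
    also have "\<dots> = integral\<^sup>L M f5 + integral\<^sup>L M (\<lambda>s. (y k s * (\<bar>y j s\<bar> + \<epsilon>) * G) * (w j s / \<omega>))"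
    proof (rule Bochner_Integration.integral_add[OF if5])
      show "integrable M (\<lambda>s. (y k s * (\<bar>y j s\<bar> + \<epsilon>) * G) * (w j s / \<omega>))"
        by (rule int) ((intro bI)+, measurable)
    qed
    also have "integral\<^sup>L M (\<lambda>s. (y k s * (\<bar>y j s\<bar> + \<epsilon>) * G) * (w j s / \<omega>)) = 0"
      by (rule P.indep_zero[OF indep wv w_prob \<omega>]) (measurable, (intro bI)+)
    finally show ?thesis by simp
  qed
  have kj1: "k - 1 = j" using kj by simp
  show ?thesis
    unfolding step1 IR0 kj1 I5[symmetric] f1_def f2_def f3_def f4_def f6_def
    by (simp add: algebra_simps)
qed

end
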